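(* Let $n\geq 2$ and $M>2n$ be integers, $\Omega>0$, and let $\omega_q=-\Omega+(q-1)h$, $q=1,\dots,M$, with $h=\frac{2\Omega}{M-1}$. Let $\mu=\sum_{j=1}^n a_j\delta_{y_j}$ with $a_j\in\mathbb C\setminus\{0\}$ and pairwise distinct $y_j\in I(n,\Omega):=\big[-\frac{(n-1)\pi}{2\Omega},\frac{(n-1)\pi}{2\Omega}\big]$, and let $m_{\min}=\min_j|a_j|$. Let $\mathbf Y=[\mu]+\mathbf W$ with $\|\mathbf W\|_\infty<\sigma$. Assume $$\min_{p\neq j}|y_p-y_j|\geq \frac{4.4\pi e}{\Omega}\Big(\frac{\sigma}{m_{\min}}\Big)^{\frac{1}{2n-2}}.$$ Then there is no $\sigma$-admissible measure of $\mathbf Y$ with fewer than $n$ supports, i.e. there is no $k<n$, no $\hat a_1,\dots,\hat a_k\in\mathbb C$ and no $\hat y_1,\dots,\hat y_k\in\mathbb R$ such that $\hat\mu=\sum_{j=1}^k\hat a_j\delta_{\hat y_j}$ satisfies $\|[\hat\mu]-\mathbf Y\|_\infty<\sigma$.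
   Context: For a discrete measure $\nu=\sum_j b_j\delta_{x_j}$ on $\mathbb R$, $\mathcal F\nu(\omega)=\sum_j b_je^{ix_j\omega}$ and $[\nu]=(\mathcal F\nu(\omega_1),\dots,\mathcal F\nu(\omega_M))^T\in\mathbb C^M$. A discrete measure $\hat\mu$ is called a $\sigma$-admissible measure of $\mathbf Y$ if $\|[\hat\mu]-\mathbf Y\|_\infty<\sigma$. *)

theory Defs
  imports "HOL-Analysis.Analysis"
begin

text \<open>A discrete measure with k atoms is represented by amplitudes a 0..a (k-1) and
  supports y 0..y (k-1). Its Fourier transform at omega.\<close>
definition fourier_meas :: "nat \<Rightarrow> (nat \<Rightarrow> complex) \<Rightarrow> (nat \<Rightarrow> real) \<Rightarrow> real \<Rightarrow> complex" where
  "fourier_meas k a y w = (\<Sum>j<k. a j * exp (\<i> * complex_of_real (y j * w)))"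

definition sample_freq :: "real \<Rightarrow> nat \<Rightarrow> nat \<Rightarrow> real" where
  "sample_freq \<Omega> M q = - \<Omega> + (real q - 1) * (2 * \<Omega> / (real M - 1))"

definition sup_normM :: "nat \<Rightarrow> (nat \<Rightarrow> complex) \<Rightarrow> real" where
  "sup_normM M v = Max ((\<lambda>q. cmod (v q)) ` {1..M})"

definition meas_vec :: "real \<Rightarrow> nat \<Rightarrow> nat \<Rightarrow> (nat \<Rightarrow> complex) \<Rightarrow> (nat \<Rightarrow> real) \<Rightarrow> nat \<Rightarrow> complex" where
  "meas_vec \<Omega> M k a y q = fourier_meas k a y (sample_freq \<Omega> M q)"

definition admissible :: "real \<Rightarrow> nat \<Rightarrow> real \<Rightarrow> (nat \<Rightarrow> complex) \<Rightarrow> nat \<Rightarrow> (nat \<Rightarrow> complex) \<Rightarrow> (nat \<Rightarrow> real) \<Rightarrow> bool" where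
  "admissible \<Omega> M \<sigma> Y k a y \<longleftrightarrow> sup_normM M (\<lambda>q. meas_vec \<Omega> M k a y q - Y q) < \<sigma>"

end

theory Submission
  imports Defs "HOL-Computational_Algebra.Polynomial"
begin


lemma jordan_sin:
  fixes t :: real assumes "0 \<le> t" "t \<le> pi/2" shows "2*t/pi \<le> sin t"
proof (cases "t \<le> pi/2 - 1")
  case True
  have b: "\<bar>sin t - (\<Sum>m<3. sin_coeff m * t ^ m)\<bar> \<le> inverse (fact 3) * \<bar>t\<bar> ^ 3"
    by (rule Maclaurin_sin_bound)
  have s: "(\<Sum>m<3. sin_coeff m * t ^ m) = t"
    by (simp add: eval_nat_numeral sin_coeff_def)
  have "sin t \<ge> t - t^3/6" using b s assms by (simp add: eval_nat_numeral abs_if split: if_splits)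
  moreover have "t \<le> 1" using True pi_less_4 by linarith
  moreover have "t^3/6 \<le> t/3" 
  proof -
    have "t^2 \<le> 1" using \<open>t \<le> 1\<close> assms by (simp add: power_le_one)
    then have "t * t^2 \<le> t * 1" using assms by (intro mult_left_mono) auto
    then show ?thesis using assms by (simp add: eval_nat_numeral)
  qed
  moreover have "2*t/pi \<le> 2*t/3" using pi_gt3 assms by (intro divide_left_mono) auto
  ultimately show ?thesis by linarith
next
  case False
  define u where "u = pi/2 - t"
  have u: "0 \<le> u" "u \<le> 1" using False assms by (auto simp: u_def)
  have c1: "sin t = cos u" by (simp add: u_def cos_diff)
  have c2: "cos u = 1 - 2 * sin (u/2) ^ 2" using cos_double_sin[of "u/2"] by simp
  have c3: "sin (u/2) ^ 2 \<le> (u/2)^2"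
    using abs_sin_x_le_abs_x[of "u/2"] u by (metis abs_le_square_iff)
  have "sin t \<ge> 1 - u^2/2" using c1 c2 c3 by (simp add: power_divide)
  moreover have "u^2/2 \<le> u/2" using u by (simp add: power2_eq_square mult_left_le)
  moreover have "u/2 \<le> 2*u/pi" using u pi_less_4 pi_gt_zero by (simp add: field_simps) (metis mult.commute mult_right_mono less_imp_le)
  moreover have "2*t/pi = 1 - 2*u/pi" by (simp add: u_def field_simps)
  ultimately show ?thesis by linarith
qed

lemma chord_bound:
  fixes \<alpha> :: real assumes "\<bar>\<alpha>\<bar> \<le> pi"
  shows "2*\<bar>\<alpha>\<bar>/pi \<le> cmod (exp (\<i> * complex_of_real \<alpha>) - 1)"
proof -
  have e: "exp (\<i> * complex_of_real \<alpha>) = cis \<alpha>" by (simp add: cis_conv_exp)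
  have "(cmod (cis \<alpha> - 1))^2 = (cos \<alpha> - 1)^2 + (sin \<alpha>)^2"
    by (simp add: cmod_power2)
  also have "\<dots> = 2 - 2 * cos \<alpha>" by (simp add: power2_eq_square algebra_simps sin_squared_eq)
  also have "\<dots> = (2 * sin (\<alpha>/2))^2" using cos_double_sin[of "\<alpha>/2"] by (simp add: power_mult_distrib)
  finally have "cmod (cis \<alpha> - 1) = \<bar>2 * sin (\<alpha>/2)\<bar>"
    by (metis norm_ge_zero real_sqrt_abs real_sqrt_unique)
  moreover have "2 * (\<bar>\<alpha>\<bar>/2) / pi \<le> sin (\<bar>\<alpha>\<bar>/2)" using assms by (intro jordan_sin) auto
  moreover have "sin (\<bar>\<alpha>\<bar>/2) = \<bar>sin (\<alpha>/2)\<bar>"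
  proof (cases "\<alpha> \<ge> 0")
    case True thus ?thesis using sin_ge_zero[of "\<alpha>/2"] assms by auto
  next
    case False thus ?thesis using sin_ge_zero[of "-\<alpha>/2"] assms by auto
  qed
  ultimately show ?thesis using e by auto
qed

lemma fact_lower:
  fixes N :: nat assumes "N \<ge> 1" shows "exp 1 * (real N / exp 1)^N \<le> fact N"
  using assms
proof (induction N rule: dec_induct)
  case base thus ?case by simp
next
  case (step N)
  have N: "real N \<ge> 1" using step by simp
  have key: "(1 + 1/real N)^N \<le> exp 1"
  proof -
    have "(1 + 1/real N)^N \<le> (exp (1/real N))^N"
      by (intro power_mono) (auto simp: add.commute exp_ge_add_one_self)
    also have "\<dots> = exp 1" using N by (simp add: exp_of_nat_mult[symmetric])
    finally show ?thesis .
  qed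
  have "exp 1 * (real (Suc N) / exp 1)^(Suc N) = (real (Suc N)/exp 1) * (exp 1 * (real N / exp 1)^N) * ((real (Suc N)/real N)^N)"
    using N by (simp add: power_divide field_simps)
  also have "(real (Suc N)/real N)^N = (1 + 1/real N)^N" using N by (simp add: field_simps)
  also have "(real (Suc N)/exp 1) * (exp 1 * (real N / exp 1)^N) * (1 + 1/real N)^N
      \<le> (real (Suc N)/exp 1) * fact N * exp 1"
    by (intro mult_mono step.IH key) auto
  also have "\<dots> = fact (Suc N)" by simp
  finally show ?case .
qed



fun Dop :: "(nat \<Rightarrow> complex) \<Rightarrow> nat \<Rightarrow> (nat \<Rightarrow> complex) \<Rightarrow> nat \<Rightarrow> complex" where
  "Dop f 0 u t = u t"
| "Dop f (Suc K) u t = Dop f K u (Suc t) - f K * Dop f K u t"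

lemma Dop_exp:
  "Dop f K (\<lambda>t. \<Sum>i\<in>A. \<beta> i * \<zeta> i ^ t) t = (\<Sum>i\<in>A. \<beta> i * (\<Prod>k<K. \<zeta> i - f k) * \<zeta> i ^ t)"
proof (induction K arbitrary: t)
  case 0 then show ?case by simp
next
  case (Suc K)
  have "Dop f (Suc K) (\<lambda>t. \<Sum>i\<in>A. \<beta> i * \<zeta> i ^ t) t =
     (\<Sum>i\<in>A. \<beta> i * (\<Prod>k<K. \<zeta> i - f k) * \<zeta> i ^ Suc t) - f K * (\<Sum>i\<in>A. \<beta> i * (\<Prod>k<K. \<zeta> i - f k) * \<zeta> i ^ t)"
    by (simp add: Suc)
  also have "\<dots> = (\<Sum>i\<in>A. \<beta> i * (\<Prod>k<K. \<zeta> i - f k) * \<zeta> i ^ Suc t - f K * (\<beta> i * (\<Prod>k<K. \<zeta> i - f k) * \<zeta> i ^ t))"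
    by (simp add: sum_distrib_left sum_subtractf)
  also have "\<dots> = (\<Sum>i\<in>A. \<beta> i * (\<Prod>k<Suc K. \<zeta> i - f k) * \<zeta> i ^ t)"
    by (intro sum.cong) (simp_all add: algebra_simps)
  finally show ?case .
qed

lemma Dop_diff: "Dop f K (\<lambda>t. u t - v t) t = Dop f K u t - Dop f K v t"
  by (induction K arbitrary: t) (auto simp: right_diff_distrib)

lemma Dop_bound:
  assumes "\<forall>k<K. cmod (f k) \<le> 1" "\<forall>t'. t' \<le> t + K \<longrightarrow> cmod (u t') < B"
  shows "cmod (Dop f K u t) < 2^K * B"
  using assms
proof (induction K arbitrary: t)
  case 0 then show ?case by simp
next
  case (Suc K)
  have a: "cmod (Dop f K u (Suc t)) < 2^K * B" using Suc by (intro Suc.IH) auto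
  have b: "cmod (Dop f K u t) < 2^K * B" using Suc by (intro Suc.IH) auto
  have c: "cmod (f K * Dop f K u t) \<le> cmod (Dop f K u t)"
    using Suc.prems(1) by (simp add: norm_mult mult_left_le_one_le)
  have "cmod (Dop f (Suc K) u t) \<le> cmod (Dop f K u (Suc t)) + cmod (f K * Dop f K u t)"
    by (simp add: norm_triangle_ineq4)
  then show ?case using a b c by simp
qed

lemma lagrange_sum:
  fixes z c :: "nat \<Rightarrow> complex"
  assumes inj: "inj_on z {..N}"
  shows "(\<Sum>j\<le>N. (\<Prod>l<N. z j - c l) / (\<Prod>p\<in>{..N}-{j}. z j - z p)) = 1"
proof -
  define Qp where "Qp = (\<Prod>l<N. [:- c l, 1:])"
  define B where "B j = (\<Prod>p\<in>{..N}-{j}. [:- z p, 1:])" for j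
  define w where "w j = (\<Prod>p\<in>{..N}-{j}. z j - z p)" for j
  define Lp where "Lp = (\<Sum>j\<le>N. smult ((\<Prod>l<N. z j - c l) / w j) (B j))"
  have polyQ: "poly Qp x = (\<Prod>l<N. x - c l)" for x by (simp add: Qp_def poly_prod)
  have polyB: "poly (B j) x = (\<Prod>p\<in>{..N}-{j}. x - z p)" for j x by (simp add: B_def poly_prod)
  have cardj: "card ({..N}-{j}) = N" if "j \<le> N" for j using that by simp
  have degB: "degree (B j) = N" if "j \<le> N" for j
    unfolding B_def using that by (subst degree_prod_eq_sum_degree) auto
  have lcB: "coeff (B j) N = 1" if "j \<le> N" for j
    using lead_coeff_prod[of "\<lambda>p. [:- z p, 1:]" "{..N}-{j}"] degB[OF that] by (simp add: B_def)
  have degQ: "degree Qp = N" unfolding Qp_def by (subst degree_prod_eq_sum_degree) auto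
  have lcQ: "coeff Qp N = 1"
    using lead_coeff_prod[of "\<lambda>l. [:- c l, 1:]" "{..<N}"] degQ by (simp add: Qp_def)
  have w0: "w j \<noteq> 0" if "j \<le> N" for j
    unfolding w_def using inj that by (auto simp: inj_on_def)
  have degL: "degree Lp \<le> N"
    unfolding Lp_def by (intro degree_sum_le) (auto intro: order.trans[OF degree_smult_le] simp: degB)
  have polyL: "poly Lp (z i) = poly Qp (z i)" if "i \<le> N" for i
  proof -
    have "poly Lp (z i) = (\<Sum>j\<le>N. ((\<Prod>l<N. z j - c l) / w j) * poly (B j) (z i))"
      by (simp add: Lp_def poly_sum)
    also have "\<dots> = ((\<Prod>l<N. z i - c l) / w i) * poly (B i) (z i) + (\<Sum>j\<in>{..N}-{i}. ((\<Prod>l<N. z j - c l) / w j) * poly (B j) (z i))"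
      by (rule sum.remove) (use that in auto)
    also have "(\<Sum>j\<in>{..N}-{i}. ((\<Prod>l<N. z j - c l) / w j) * poly (B j) (z i)) = 0"
      using that by (intro sum.neutral) (auto simp: polyB intro!: prod_zero)
    also have "poly (B i) (z i) = w i" by (simp add: polyB w_def)
    also have "((\<Prod>l<N. z i - c l) / w i) * w i + 0 = poly Qp (z i)" using w0[OF that] by (simp add: polyQ)
    finally show ?thesis .
  qed
  have "Qp = Lp"
  proof (rule poly_eqI_degree[of "z ` {..N}"])
    have "card (z ` {..N}) = Suc N" using inj by (simp add: card_image)
    then show "degree Qp < card (z ` {..N})" "degree Lp < card (z ` {..N})" using degQ degL by auto
  qed (use polyL in auto)
  then have "coeff Lp N = 1" using lcQ by simp
  moreover have "coeff Lp N = (\<Sum>j\<le>N. (\<Prod>l<N. z j - c l) / w j)"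
    by (simp add: Lp_def coeff_sum lcB)
  ultimately show ?thesis by (simp add: w_def)
qed

lemma prod_dist_fact:
  assumes "j \<le> N"
  shows "(\<Prod>p\<in>{..N}-{j}. \<bar>real p - real j\<bar>) = fact j * fact (N - j)"
proof -
  have split: "{..N}-{j} = {..<j} \<union> {Suc j..N}" using assms by auto
  have "(\<Prod>p\<in>{..N}-{j}. \<bar>real p - real j\<bar>) = (\<Prod>p\<in>{..<j}. \<bar>real p - real j\<bar>) * (\<Prod>p\<in>{Suc j..N}. \<bar>real p - real j\<bar>)"
    unfolding split by (rule prod.union_disjoint) auto
  also have "(\<Prod>p\<in>{..<j}. \<bar>real p - real j\<bar>) = fact j"
  proof -
    have "(\<Prod>p\<in>{..<j}. \<bar>real p - real j\<bar>) = (\<Prod>p\<in>{..<j}. real (j - p))"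
      by (intro prod.cong) auto
    also have "\<dots> = (\<Prod>p\<in>{1..j}. real p)"
      by (rule prod.reindex_bij_witness[of _ "\<lambda>p. j - p" "\<lambda>p. j - p"]) auto
    also have "\<dots> = fact j" by (simp add: fact_prod)
    finally show ?thesis .
  qed
  also have "(\<Prod>p\<in>{Suc j..N}. \<bar>real p - real j\<bar>) = fact (N - j)"
  proof -
    have "(\<Prod>p\<in>{Suc j..N}. \<bar>real p - real j\<bar>) = (\<Prod>p\<in>{Suc j..N}. real (p - j))"
      by (intro prod.cong) auto
    also have "\<dots> = (\<Prod>p\<in>{1..N-j}. real p)"
      by (rule prod.reindex_bij_witness[of _ "\<lambda>p. p + j" "\<lambda>p. p - j"]) (use assms in auto)
    also have "\<dots> = fact (N - j)" by (simp add: fact_prod)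
    finally show ?thesis .
  qed
  finally show ?thesis .
qed

lemma sum_inv_fact_sq:
  "(\<Sum>j\<le>N. 1 / (fact j * fact (N - j))^2) \<le> (4::real)^N / (fact N)^2"
proof -
  have e: "1 / (fact j * fact (N - j)) = real (N choose j) / fact N" if "j \<le> N" for j
    using binomial_fact[OF that, where 'a=real] by (simp add: field_simps)
  have "(\<Sum>j\<le>N. 1 / (fact j * fact (N - j))^2) = (\<Sum>j\<le>N. (real (N choose j))^2) / (fact N)^2"
    by (simp add: sum_divide_distrib power_one_over[symmetric] e power_divide)
  also have "(\<Sum>j\<le>N. (real (N choose j))^2) \<le> (\<Sum>j\<le>N. real (N choose j) * 2^N)"
  proof (intro sum_mono)
    fix j assume "j \<in> {..N}"
    have "real (N choose j) \<le> (\<Sum>k\<le>N. real (N choose k))"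
      using \<open>j \<in> {..N}\<close> by (intro member_le_sum) auto
    also have "\<dots> = 2^N" using choose_row_sum[of N] by (metis of_nat_numeral of_nat_power of_nat_sum)
    finally show "(real (N choose j))^2 \<le> real (N choose j) * 2^N"
      by (simp add: power2_eq_square mult_left_mono)
  qed
  also have "\<dots> = 2^N * 2^N" using choose_row_sum[of N]
    by (simp add: sum_distrib_right[symmetric]) (metis of_nat_numeral of_nat_power of_nat_sum)
  also have "\<dots> = 4^N" by (simp add: power_mult_distrib[symmetric])
  finally show ?thesis by (simp add: divide_right_mono)
qed



lemma exp_lin:
  "exp (\<i> * complex_of_real (y * (w + real t * H))) =
   exp (\<i> * complex_of_real (y * w)) * exp (\<i> * complex_of_real (y * H)) ^ t"
proof -
  have "\<i> * complex_of_real (y * (w + real t * H)) = \<i> * complex_of_real (y * w) + of_nat t * (\<i> * complex_of_real (y * H))"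
    by (simp add: algebra_simps)
  then show ?thesis by (simp add: exp_add exp_of_nat_mult)
qed

lemma gap_mult:
  fixes y :: "nat \<Rightarrow> real"
  assumes "\<forall>i<N. y (Suc i) - y i \<ge> D" "j \<le> p" "p \<le> N"
  shows "y p - y j \<ge> (real p - real j) * D"
  using assms(2,3)
proof (induction p rule: dec_induct)
  case base then show ?case by simp
next
  case (step p)
  have "y (Suc p) - y p \<ge> D" using assms(1) step by auto
  then show ?case using step by (simp add: algebra_simps)
qed

lemma four_pow: "(4::real)^N = (2^N)^2"
  by (induct N) (simp_all add: power2_eq_square algebra_simps)

lemma core:
  fixes N M :: nat and \<Omega> \<sigma> D m :: real and a ah :: "nat \<Rightarrow> complex" and y yh :: "nat \<Rightarrow> real"
  assumes N: "N \<ge> 1" and M: "M > 2*N + 2" and Om: "\<Omega> > 0" and D: "D > 0" and m: "m > 0"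
    and gap: "\<forall>i<N. y (Suc i) - y i \<ge> D"
    and rng: "\<forall>j\<le>N. \<bar>y j\<bar> \<le> real N * pi / (2*\<Omega>)"
    and amp: "\<forall>j\<le>N. cmod (a j) \<ge> m"
    and samp: "\<forall>q\<in>{1..M}. cmod (meas_vec \<Omega> M (Suc N) a y q - meas_vec \<Omega> M N ah yh q) < 2*\<sigma>"
  shows "\<exists>H. H \<ge> \<Omega>/(2*N) \<and> 1 < 2^(2*N+1) * (\<sigma>/m) / ((H*D/pi)^(2*N) * (fact N)^2)"
proof -
  define s where "s = (M-1) div (2*N)"
  define H where "H = real s * (2*\<Omega>/(real M - 1))"
  have M1: "real M - 1 = real (M-1)" "real (M-1) > 0" using M by auto
  have Hdef2: "H = real s * (2*\<Omega>/real (M-1))" using M1(1) by (simp only: H_def)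
  have s1: "s \<ge> 1" using M N div_greater_zero_iff[of "M-1" "2*N"] unfolding s_def by linarith
  have s2: "2*N * s \<le> M-1" unfolding s_def by (metis mult.commute times_div_less_eq_dividend)
  have s3: "M-1 < 2*N*(s+1)" unfolding s_def using N dividend_less_times_div[of "2*N" "M-1"] by (simp add: algebra_simps)
  have Hpos: "H > 0" using s1 M1(2) Om by (simp add: Hdef2)
  have Hup: "H \<le> \<Omega>/N"
  proof -
    have "real (2*N * s) \<le> real (M-1)" using s2 by linarith
    then have "\<Omega> * (2*real N*real s) \<le> \<Omega> * real (M-1)" using Om by (intro mult_left_mono) auto
    then have "\<Omega> * (2*real N*real s) / real (M-1) \<le> \<Omega>" using M1(2) by (simp add: pos_divide_le_eq)
    moreover have "H * real N = \<Omega> * (2*real N*real s) / real (M-1)" by (simp add: Hdef2)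
    ultimately have "H * real N \<le> \<Omega>" by simp
    then show ?thesis using N by (simp add: pos_le_divide_eq)
  qed
  have Hlow: "H \<ge> \<Omega>/(2*N)"
  proof -
    have "real (M-1) < real (2*N*(s+1))" using s3 by linarith
    also have "real (2*N*(s+1)) \<le> real (4*N * s)"
    proof -
      have "N*1 \<le> N * s" using s1 by (rule mult_le_mono2)
      then have "2*N*(s+1) \<le> 4*N * s" by (simp add: algebra_simps)
      then show ?thesis by (simp only: of_nat_le_iff)
    qed
    finally have "real (M-1) < 4 * real N * real s" by simp
    then have "\<Omega> * real (M-1) < \<Omega> * (4 * real N * real s)" using Om by simp
    then have "\<Omega> < \<Omega> * (4 * real N * real s) / real (M-1)" using M1(2) by (simp add: pos_less_divide_eq)
    also have "\<Omega> * (4 * real N * real s) / real (M-1) = H * (2 * real N)" by (simp add: Hdef2)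
    finally show ?thesis using N by (simp add: pos_divide_le_eq)
  qed
  define \<omega>1 where "\<omega>1 = sample_freq \<Omega> M 1"
  define \<zeta> where "\<zeta> p = exp (\<i> * complex_of_real (y p * H))" for p
  define \<zeta>h where "\<zeta>h p = exp (\<i> * complex_of_real (yh p * H))" for p
  define E where "E p = exp (\<i> * complex_of_real (y p * \<omega>1))" for p
  define Eh where "Eh p = exp (\<i> * complex_of_real (yh p * \<omega>1))" for p
  define u where "u t = (\<Sum>p<Suc N. (a p * E p) * \<zeta> p ^ t) - (\<Sum>l<N. (ah l * Eh l) * \<zeta>h l ^ t)" for t
  have freq: "sample_freq \<Omega> M (1 + t * s) = \<omega>1 + real t * H" for t
    by (simp add: \<omega>1_def sample_freq_def H_def algebra_simps)
  have rep: "meas_vec \<Omega> M K b z (1 + t * s) = (\<Sum>p<K. (b p * exp (\<i> * complex_of_real (z p * \<omega>1))) * exp (\<i> * complex_of_real (z p * H)) ^ t)"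
    for K b z t
    unfolding meas_vec_def fourier_meas_def freq exp_lin by (simp add: mult.assoc)
  have ubound: "cmod (u t) < 2*\<sigma>" if "t \<le> 2*N" for t
  proof -
    have "t * s \<le> 2*N * s" using that by simp
    then have "t * s \<le> M - 1" using s2 by linarith
    then have "1 + t * s \<in> {1..M}" using M by auto
    then have "cmod (meas_vec \<Omega> M (Suc N) a y (1 + t * s) - meas_vec \<Omega> M N ah yh (1 + t * s)) < 2*\<sigma>"
      using samp by blast
    moreover have "meas_vec \<Omega> M (Suc N) a y (1 + t * s) - meas_vec \<Omega> M N ah yh (1 + t * s) = u t"
      unfolding u_def rep E_def Eh_def \<zeta>_def \<zeta>h_def by simp
    ultimately show ?thesis by simp
  qed
  define Q where "Q j = (\<Prod>l<N. \<zeta> j - \<zeta>h l)" for j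
  define W where "W j = (\<Prod>p\<in>{..N}-{j}. \<zeta> j - \<zeta> p)" for j
  have ufun: "u = (\<lambda>t. (\<Sum>p<Suc N. (a p * E p) * \<zeta> p ^ t) - (\<Sum>l<N. (ah l * Eh l) * \<zeta>h l ^ t))"
    by (rule ext) (simp add: u_def)
  have UB: "cmod (Q j) * cmod (W j) < 2^(2*N+1) * \<sigma> / m" if j: "j \<le> N" for j
  proof -
    define g where "g i = (if i < j then i else Suc i)" for i
    define f where "f k = (if k < N then \<zeta>h k else \<zeta> (g (k - N)))" for k
    have f1: "cmod (f k) \<le> 1" for k by (simp add: f_def \<zeta>_def \<zeta>h_def)
    have Dv: "Dop f (2*N) u 0 = (\<Sum>p<Suc N. (a p * E p) * (\<Prod>k<2*N. \<zeta> p - f k))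
                 - (\<Sum>l<N. (ah l * Eh l) * (\<Prod>k<2*N. \<zeta>h l - f k))"
      unfolding ufun Dop_diff Dop_exp by simp
    have z2: "(\<Sum>l<N. (ah l * Eh l) * (\<Prod>k<2*N. \<zeta>h l - f k)) = 0"
    proof (intro sum.neutral ballI)
      fix l assume "l \<in> {..<N}"
      then have "(\<Prod>k<2*N. \<zeta>h l - f k) = 0"
        by (intro prod_zero bexI[of _ l]) (auto simp: f_def)
      then show "(ah l * Eh l) * (\<Prod>k<2*N. \<zeta>h l - f k) = 0" by simp
    qed
    have z1: "(\<Sum>p\<in>{..<Suc N}-{j}. (a p * E p) * (\<Prod>k<2*N. \<zeta> p - f k)) = 0"
    proof (intro sum.neutral ballI)
      fix p assume p: "p \<in> {..<Suc N}-{j}"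
      define k where "k = N + (if p < j then p else p - 1)"
      have "k < 2*N" "f k = \<zeta> p" using p j by (auto simp: k_def f_def g_def)
      then have "(\<Prod>k<2*N. \<zeta> p - f k) = 0"
        by (intro prod_zero bexI[of _ k]) auto
      then show "(a p * E p) * (\<Prod>k<2*N. \<zeta> p - f k) = 0" by simp
    qed
    have splitset: "{..<2*N} = {..<N} \<union> {N..<2*N}" by auto
    have pj: "(\<Prod>k<2*N. \<zeta> j - f k) = Q j * W j"
    proof -
      have "(\<Prod>k<2*N. \<zeta> j - f k) = (\<Prod>k<N. \<zeta> j - f k) * (\<Prod>k\<in>{N..<2*N}. \<zeta> j - f k)"
        unfolding splitset by (rule prod.union_disjoint) auto
      moreover have "(\<Prod>k<N. \<zeta> j - f k) = Q j" unfolding Q_def by (intro prod.cong) (auto simp: f_def)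
      moreover have "(\<Prod>k\<in>{N..<2*N}. \<zeta> j - f k) = W j"
        unfolding W_def
        by (rule prod.reindex_bij_witness[of _ "\<lambda>p. N + (if p < j then p else p - 1)" "\<lambda>k. g (k - N)"])
           (use j in \<open>auto simp: g_def f_def\<close>)
      ultimately show ?thesis by simp
    qed
    have "Dop f (2*N) u 0 = (a j * E j) * (Q j * W j)"
    proof -
      have "(\<Sum>p<Suc N. (a p * E p) * (\<Prod>k<2*N. \<zeta> p - f k)) =
            (a j * E j) * (\<Prod>k<2*N. \<zeta> j - f k) + (\<Sum>p\<in>{..<Suc N}-{j}. (a p * E p) * (\<Prod>k<2*N. \<zeta> p - f k))"
        by (rule sum.remove) (use j in auto)
      then show ?thesis using Dv z1 z2 pj by simp
    qed
    moreover have "cmod (Dop f (2*N) u 0) < 2^(2*N) * (2*\<sigma>)"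
      by (rule Dop_bound) (use f1 ubound in auto)
    ultimately have "cmod (a j) * (cmod (Q j) * cmod (W j)) < 2^(2*N) * (2*\<sigma>)"
      by (simp add: norm_mult E_def)
    moreover have "m * (cmod (Q j) * cmod (W j)) \<le> cmod (a j) * (cmod (Q j) * cmod (W j))"
      using amp j by (intro mult_right_mono) auto
    ultimately have "m * (cmod (Q j) * cmod (W j)) < 2^(2*N+1) * \<sigma>" by simp
    then show ?thesis using m by (simp add: field_simps)
  qed
  define x where "x = H * D / pi"
  have xpos: "x > 0" using Hpos D by (simp add: x_def)
  have chord: "cmod (\<zeta> j - \<zeta> p) \<ge> 2 * x * \<bar>real p - real j\<bar>" if "j \<le> N" "p \<le> N" for j p
  proof -
    define \<alpha> where "\<alpha> = (y j - y p) * H"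
    have "\<zeta> j = \<zeta> p * exp (\<i> * complex_of_real \<alpha>)"
    proof -
      have "\<i> * complex_of_real (y j * H) = \<i> * complex_of_real (y p * H) + \<i> * complex_of_real \<alpha>"
        by (simp add: \<alpha>_def algebra_simps)
      then show ?thesis by (simp add: \<zeta>_def exp_add)
    qed
    then have "\<zeta> j - \<zeta> p = \<zeta> p * (exp (\<i> * complex_of_real \<alpha>) - 1)"
      by (simp add: right_diff_distrib)
    moreover have "cmod (\<zeta> p) = 1" by (simp only: \<zeta>_def norm_exp_i_times)
    ultimately have e: "cmod (\<zeta> j - \<zeta> p) = cmod (exp (\<i> * complex_of_real \<alpha>) - 1)"
      by (simp add: norm_mult)
    have yd: "\<bar>y j - y p\<bar> \<le> real N * pi / \<Omega>"
    proof -
      define K where "K = real N * pi / (2 * \<Omega>)"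
      have "\<bar>y j\<bar> \<le> K" "\<bar>y p\<bar> \<le> K" using rng that by (auto simp: K_def)
      moreover have "real N * pi / \<Omega> = 2 * K" by (simp add: K_def field_simps)
      moreover have "\<bar>y j - y p\<bar> \<le> \<bar>y j\<bar> + \<bar>y p\<bar>" by (rule abs_triangle_ineq4)
      ultimately show ?thesis by linarith
    qed
    have "\<bar>\<alpha>\<bar> = \<bar>y j - y p\<bar> * H" using Hpos by (simp add: \<alpha>_def abs_mult)
    also have "\<dots> \<le> (real N * pi / \<Omega>) * (\<Omega> / real N)"
      using yd Hup Hpos by (intro mult_mono) auto
    also have "\<dots> = pi" using Om N by simp
    finally have ap: "\<bar>\<alpha>\<bar> \<le> pi" .
    have ydl: "\<bar>y j - y p\<bar> \<ge> \<bar>real p - real j\<bar> * D"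
    proof (cases "j \<le> p")
      case True
      then have "y p - y j \<ge> (real p - real j) * D" using gap_mult[OF gap True that(2)] by simp
      moreover have "\<bar>real p - real j\<bar> = real p - real j" using True by simp
      moreover have "\<bar>y j - y p\<bar> \<ge> -(y j - y p)" by (rule abs_ge_minus_self)
      ultimately show ?thesis by linarith
    next
      case False
      then have "y j - y p \<ge> (real j - real p) * D" using gap_mult[OF gap _ that(1), of p] by simp
      moreover have "\<bar>real p - real j\<bar> = real j - real p" using False by simp
      moreover have "\<bar>y j - y p\<bar> \<ge> y j - y p" by (rule abs_ge_self)
      ultimately show ?thesis by (metis order.trans)
    qed
    have "2 * x * \<bar>real p - real j\<bar> = 2 * (\<bar>real p - real j\<bar> * D) * H / pi" by (simp add: x_def)
    also have "\<dots> \<le> 2 * \<bar>y j - y p\<bar> * H / pi"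
      using ydl Hpos by (intro divide_right_mono mult_right_mono) auto
    also have "\<dots> = 2 * \<bar>\<alpha>\<bar> / pi" using Hpos by (simp add: \<alpha>_def abs_mult)
    also have "\<dots> \<le> cmod (\<zeta> j - \<zeta> p)" using chord_bound[OF ap] e by simp
    finally show ?thesis .
  qed
  have inj: "inj_on \<zeta> {..N}"
  proof (rule inj_onI)
    fix j p assume jp: "j \<in> {..N}" "p \<in> {..N}" "\<zeta> j = \<zeta> p"
    show "j = p"
    proof (rule ccontr)
      assume "j \<noteq> p"
      then have "\<bar>real p - real j\<bar> > 0" by simp
      then have "2 * x * \<bar>real p - real j\<bar> > 0" using xpos by simp
      then show False using chord[of j p] jp by simp
    qed
  qed
  have Wlow: "cmod (W j) \<ge> (2*x)^N * (fact j * fact (N - j))" if j: "j \<le> N" for j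
  proof -
    have "(2*x)^N * (fact j * fact (N - j)) = (\<Prod>p\<in>{..N}-{j}. 2 * x * \<bar>real p - real j\<bar>)"
      using j by (simp add: prod.distrib prod_dist_fact)
    also have "\<dots> \<le> (\<Prod>p\<in>{..N}-{j}. cmod (\<zeta> j - \<zeta> p))"
      using j xpos by (intro prod_mono) (auto intro: chord)
    also have "\<dots> = cmod (W j)" by (simp add: W_def prod_norm)
    finally show ?thesis .
  qed
  define C where "C = 2^(2*N+1) * \<sigma> / m"
  have Wpos: "cmod (W j) > 0" if "j \<le> N" for j
    using Wlow[OF that] xpos by (smt (verit) fact_gt_zero mult_pos_pos zero_less_power)
  have lag: "(\<Sum>j\<le>N. Q j / W j) = 1"
    unfolding Q_def W_def by (rule lagrange_sum[OF inj])
  have "1 \<le> (\<Sum>j\<le>N. cmod (Q j / W j))"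
    using norm_sum[of "\<lambda>j. Q j / W j" "{..N}"] lag by simp
  also have "\<dots> < (\<Sum>j\<le>N. C / (2*x)^(2*N) * (1 / (fact j * fact (N - j))^2))"
  proof (rule sum_strict_mono)
    fix j assume "j \<in> {..N}"
    then have j: "j \<le> N" by simp
    have wl: "cmod (W j)^2 \<ge> ((2*x)^N * (fact j * fact (N - j)))^2"
      using Wlow[OF j] xpos by (intro power_mono) auto
    have "cmod (Q j / W j) = (cmod (Q j) * cmod (W j)) / cmod (W j)^2"
      using Wpos[OF j] by (simp add: norm_divide power2_eq_square)
    also have "\<dots> < C / cmod (W j)^2"
      using UB[OF j] Wpos[OF j] by (intro divide_strict_right_mono) (auto simp: C_def)
    also have "\<dots> \<le> C / ((2*x)^N * (fact j * fact (N - j)))^2"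
    proof (rule divide_left_mono[OF wl])
      show "0 \<le> C" using UB[OF j] by (simp add: C_def) (smt (verit) mult_nonneg_nonneg norm_ge_zero)
      show "0 < cmod (W j)^2 * ((2*x)^N * (fact j * fact (N - j)))^2" using Wpos[OF j] xpos by simp
    qed
    also have "\<dots> = C / (2*x)^(2*N) * (1 / (fact j * fact (N - j))^2)"
      by (simp add: power_mult_distrib power_mult[symmetric] mult.commute)
    finally show "cmod (Q j / W j) < C / (2*x)^(2*N) * (1 / (fact j * fact (N - j))^2)" .
  qed auto
  also have "\<dots> = C / (2*x)^(2*N) * (\<Sum>j\<le>N. 1 / (fact j * fact (N - j))^2)"
    by (simp add: sum_distrib_left)
  also have "\<dots> \<le> C / (2*x)^(2*N) * (4^N / (fact N)^2)"
  proof (rule mult_left_mono[OF sum_inv_fact_sq])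
    have "0 \<le> C" using UB[of 0] by (simp add: C_def) (smt (verit) mult_nonneg_nonneg norm_ge_zero)
    then show "0 \<le> C / (2*x)^(2*N)" using xpos by simp
  qed
  also have "\<dots> = 2^(2*N+1) * (\<sigma>/m) / ((H*D/pi)^(2*N) * (fact N)^2)"
    using four_pow[of N] by (simp add: C_def x_def power_mult_distrib power_mult field_simps)
  finally show ?thesis using Hlow by blast
qed


lemma sort_perm:
  fixes y :: "nat \<Rightarrow> real"
  assumes "inj_on y {..<n}"
  obtains \<pi> where "bij_betw \<pi> {..<n} {..<n}" "\<forall>i j. i < j \<longrightarrow> j < n \<longrightarrow> y (\<pi> i) < y (\<pi> j)"
proof -
  define L where "L = sorted_list_of_set (y ` {..<n})"
  have len: "length L = n" using assms by (simp add: L_def length_sorted_list_of_set card_image)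
  have setL: "set L = y ` {..<n}" by (simp add: L_def set_sorted_list_of_set)
  have ss: "sorted_wrt (<) L" by (simp add: L_def strict_sorted_list_of_set)
  have dist: "distinct L" by (simp add: L_def distinct_sorted_list_of_set)
  define \<pi> where "\<pi> i = (SOME j. j < n \<and> y j = L ! i)" for i
  have pi: "\<pi> i < n \<and> y (\<pi> i) = L ! i" if "i < n" for i
  proof -
    have "L ! i \<in> y ` {..<n}" using that len setL nth_mem by metis
    then have "\<exists>j. j < n \<and> y j = L ! i" by auto
    then show ?thesis unfolding \<pi>_def by (rule someI_ex)
  qed
  have inj: "inj_on \<pi> {..<n}"
  proof (rule inj_onI)
    fix i i' assume "i \<in> {..<n}" "i' \<in> {..<n}" "\<pi> i = \<pi> i'"
    then have "L ! i = L ! i'" using pi by (metis lessThan_iff)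
    then show "i = i'" using dist len \<open>i \<in> {..<n}\<close> \<open>i' \<in> {..<n}\<close> by (simp add: nth_eq_iff_index_eq)
  qed
  have img: "\<pi> ` {..<n} = {..<n}" by (rule endo_inj_surj) (use pi inj in auto)
  show ?thesis
  proof (rule that)
    show "bij_betw \<pi> {..<n} {..<n}" by (simp add: bij_betw_def inj img)
    show "\<forall>i j. i < j \<longrightarrow> j < n \<longrightarrow> y (\<pi> i) < y (\<pi> j)"
      using pi ss len by (auto intro: sorted_wrt_nth_less)
  qed
qed

lemma final_arith:
  fixes N :: nat and \<Omega> \<sigma> m H D :: real
  assumes N: "N \<ge> 1" and Om: "\<Omega> > 0" and s: "\<sigma> > 0" and m: "m > 0" and H: "H \<ge> \<Omega>/(2*N)"
    and D: "D = 4.4 * pi * exp 1 / \<Omega> * (\<sigma> / m) powr (1 / (2 * real (Suc N) - 2))"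
  shows "2^(2*N+1) * (\<sigma>/m) / ((H*D/pi)^(2*N) * (fact N)^2) \<le> 1"
proof -
  define r where "r = (\<sigma> / m) powr (1 / (2 * real (Suc N) - 2))"
  have sm: "\<sigma>/m > 0" using s m by simp
  have r0: "r > 0" using sm s m by (simp add: r_def)
  have e2: "2 * real (Suc N) - 2 = real (2*N)" by simp
  have rp: "r^(2*N) = \<sigma>/m"
  proof -
    have "r^(2*N) = r powr real (2*N)" using r0 by (simp only: powr_realpow)
    also have "\<dots> = (\<sigma>/m) powr (1 / real (2*N) * real (2*N))" unfolding r_def e2 by (simp add: powr_powr)
    also have "\<dots> = \<sigma>/m" using N s m by simp
    finally show ?thesis .
  qed
  have Npos: "real N > 0" using N by simp
  have xlow: "H*D/pi \<ge> 2.2 * exp 1 * r / N"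
  proof -
    have Dr: "D = 4.4 * pi * exp 1 / \<Omega> * r" by (simp only: D r_def)
    have "H*D/pi = H * (4.4 * exp 1 * r / \<Omega>)" by (simp add: Dr)
    also have "\<dots> \<ge> (\<Omega>/(2*N)) * (4.4 * exp 1 * r / \<Omega>)" using H r0 Om by (intro mult_right_mono) auto
    finally show ?thesis using Om Npos by (simp add: field_simps)
  qed
  have A: "(H*D/pi)^(2*N) \<ge> (2.2 * exp 1 * r / N)^(2*N)"
    using xlow r0 Npos by (intro power_mono) auto
  have B: "(fact N)^2 \<ge> (exp 1 * (real N / exp 1)^N)^2"
    using fact_lower[OF N] by (intro power_mono) auto
  define L where "L = (2.2 * exp 1 * r / N)^(2*N) * (exp 1 * (real N / exp 1)^N)^2"
  have Lpos: "L > 0" using r0 Npos by (simp add: L_def)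
  have den: "(H*D/pi)^(2*N) * (fact N)^2 \<ge> L"
    unfolding L_def using A B r0 Npos by (intro mult_mono) auto
  have Lval: "L = (2.2^2)^N * exp 1^2 * (\<sigma>/m)"
  proof -
    have b: "((real N / exp 1)^N)^2 = (real N / exp 1)^(2*N)" by (metis power_mult mult.commute)
    have "L = (2.2 * exp 1 * r / N)^(2*N) * (exp 1^2 * ((real N / exp 1)^N)^2)"
      by (simp only: L_def power_mult_distrib)
    also have "\<dots> = ((2.2 * exp 1 * r / N)^(2*N) * (real N / exp 1)^(2*N)) * exp 1^2"
      by (simp only: b mult_ac)
    also have "(2.2 * exp 1 * r / N)^(2*N) * (real N / exp 1)^(2*N) = ((2.2 * exp 1 * r / N) * (real N / exp 1))^(2*N)"
      by (simp only: power_mult_distrib)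
    also have "(2.2 * exp 1 * r / N) * (real N / exp 1) = 2.2 * r" using Npos by (simp add: field_simps)
    also have "(2.2 * r)^(2*N) = (2.2^2)^N * r^(2*N)" by (simp only: power_mult_distrib power_mult)
    finally show ?thesis using rp by simp
  qed
  have c1: "2^(2*N+1) * (\<sigma>/m) / ((H*D/pi)^(2*N) * (fact N)^2) \<le> 2^(2*N+1) * (\<sigma>/m) / L"
  proof (rule divide_left_mono[OF den])
    show "0 \<le> 2^(2*N+1) * (\<sigma>/m)" using sm by (intro mult_nonneg_nonneg) auto
    show "0 < (H*D/pi)^(2*N) * (fact N)^2 * L" using den Lpos by (simp add: less_le_trans)
  qed
  have c2: "2^(2*N+1) * (\<sigma>/m) / L = 2 * (4^N / (2.2^2)^N) / exp 1^2"
    using sm s m four_pow[of N] by (simp add: Lval power_mult power_add field_simps)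
  have c3: "4^N / (2.2^2)^N \<le> (1::real)"
  proof -
    have "(4::real)^N \<le> (2.2^2)^N" by (intro power_mono) (simp_all add: power2_eq_square)
    then show ?thesis by simp
  qed
  have c4: "2 * 1 / exp 1^2 \<le> (1::real)"
  proof -
    have "exp 1 \<ge> (2::real)" using exp_ge_add_one_self[of 1] by simp
    then have "exp 1^2 \<ge> (2::real)^2" by (intro power_mono) auto
    then show ?thesis by simp
  qed
  have "2 * (4^N / (2.2^2)^N) / exp 1^2 \<le> 2 * 1 / (exp 1^2::real)"
    using c3 by (intro divide_right_mono mult_left_mono) auto
  then show ?thesis using c1 c2 c4 by linarith
qed



lemma supnorm_ge:
  assumes "q \<in> {1..M}" shows "cmod (v q) \<le> sup_normM M v"
  unfolding sup_normM_def using assms by (intro Max_ge) auto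

theorem theorem2p1:
  fixes n M :: nat and \<Omega> \<sigma> :: real
    and a :: "nat \<Rightarrow> complex" and y :: "nat \<Rightarrow> real"
    and W Y :: "nat \<Rightarrow> complex"
  assumes "n \<ge> 2" and "M > 2 * n" and "\<Omega> > 0"
    and "\<forall>j<n. a j \<noteq> 0"
    and "\<forall>p<n. \<forall>j<n. p \<noteq> j \<longrightarrow> y p \<noteq> y j"
    and "\<forall>j<n. y j \<in> {- ((real n - 1) * pi / (2 * \<Omega>)) .. (real n - 1) * pi / (2 * \<Omega>)}"
    and "\<forall>q. Y q = meas_vec \<Omega> M n a y q + W q"
    and "sup_normM M W < \<sigma>"
    and "\<forall>p<n. \<forall>j<n. p \<noteq> j \<longrightarrow>
           \<bar>y p - y j\<bar> \<ge> 4.4 * pi * exp 1 / \<Omega>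
              * (\<sigma> / (MIN j\<in>{..<n}. cmod (a j))) powr (1 / (2 * real n - 2))"
  shows "\<not> (\<exists>k < n. \<exists>ah :: nat \<Rightarrow> complex. \<exists>yh :: nat \<Rightarrow> real. admissible \<Omega> M \<sigma> Y k ah yh)"
proof
  assume "\<exists>k < n. \<exists>ah :: nat \<Rightarrow> complex. \<exists>yh :: nat \<Rightarrow> real. admissible \<Omega> M \<sigma> Y k ah yh"
  then obtain k ah yh where k: "k < n" and adm: "admissible \<Omega> M \<sigma> Y k ah yh" by blast
  define N where "N = n - 1"
  have nN: "n = Suc N" and N1: "N \<ge> 1" using assms(1) by (auto simp: N_def)
  have M: "M > 2*N + 2" using assms(2) nN by simp
  have Om: "\<Omega> > 0" by fact
  define m where "m = (MIN j\<in>{..<n}. cmod (a j))"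
  have fin: "finite ((\<lambda>j. cmod (a j)) ` {..<n})" "(\<lambda>j. cmod (a j)) ` {..<n} \<noteq> {}" using nN by auto
  have m_le: "m \<le> cmod (a j)" if "j < n" for j
    unfolding m_def using fin that by (intro Min_le) auto
  have m_pos: "m > 0"
  proof -
    have "m \<in> (\<lambda>j. cmod (a j)) ` {..<n}" unfolding m_def using fin by (rule Min_in)
    then show ?thesis using assms(4) by auto
  qed
  have sig: "\<sigma> > 0"
  proof -
    have "0 \<le> cmod (W 1)" by simp
    also have "\<dots> \<le> sup_normM M W" using M by (intro supnorm_ge) auto
    finally show ?thesis using assms(8) by linarith
  qed
  have inj: "inj_on y {..<n}" using assms(5) by (auto simp: inj_on_def)
  obtain \<pi> where bij: "bij_betw \<pi> {..<n} {..<n}" and mono: "\<forall>i j. i < j \<longrightarrow> j < n \<longrightarrow> y (\<pi> i) < y (\<pi> j)"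
    using sort_perm[OF inj] by blast
  have pin: "\<pi> i < n" if "i < n" for i using bij that by (auto simp: bij_betw_def)
  have piinj: "\<pi> i \<noteq> \<pi> j" if "i < n" "j < n" "i \<noteq> j" for i j
    using bij that by (auto simp: bij_betw_def inj_on_def)
  define a' where "a' i = a (\<pi> i)" for i
  define y' where "y' i = y (\<pi> i)" for i
  define ah' where "ah' l = (if l < k then ah l else 0)" for l
  have mv: "meas_vec \<Omega> M (Suc N) a' y' q = meas_vec \<Omega> M n a y q" for q
    unfolding meas_vec_def fourier_meas_def a'_def y'_def nN[symmetric]
    by (rule sum.reindex_bij_betw[OF bij])
  have mvh: "meas_vec \<Omega> M N ah' yh q = meas_vec \<Omega> M k ah yh q" for q
  proof -
    have kN: "k \<le> N" using k nN by simp
    have "meas_vec \<Omega> M N ah' yh q = (\<Sum>l\<in>{..<N}. (if l < k then ah l * exp (\<i> * complex_of_real (yh l * sample_freq \<Omega> M q)) else 0))"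
      unfolding meas_vec_def fourier_meas_def ah'_def by (intro sum.cong) auto
    also have "\<dots> = (\<Sum>l\<in>{..<N} \<inter> {l. l < k}. ah l * exp (\<i> * complex_of_real (yh l * sample_freq \<Omega> M q)))"
      using sum.inter_restrict[of "{..<N}" "\<lambda>l. ah l * exp (\<i> * complex_of_real (yh l * sample_freq \<Omega> M q))" "{l. l < k}"]
      by simp
    also have "{..<N} \<inter> {l. l < k} = {..<k}" using kN by auto
    finally show ?thesis by (simp add: meas_vec_def fourier_meas_def)
  qed
  define D where "D = 4.4 * pi * exp 1 / \<Omega> * (\<sigma> / m) powr (1 / (2 * real (Suc N) - 2))"
  have Dpos: "D > 0" using sig m_pos Om by (simp add: D_def)
  have gap: "\<forall>i<N. y' (Suc i) - y' i \<ge> D"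
  proof (intro allI impI)
    fix i assume i: "i < N"
    have lt: "y' i < y' (Suc i)" using mono i nN by (simp add: y'_def)
    have "\<bar>y (\<pi> (Suc i)) - y (\<pi> i)\<bar> \<ge> D"
      using assms(9) pin[of i] pin[of "Suc i"] piinj[of "Suc i" i] i nN unfolding D_def m_def
      by auto
    then show "y' (Suc i) - y' i \<ge> D" using lt by (simp add: y'_def)
  qed
  have rng: "\<forall>j\<le>N. \<bar>y' j\<bar> \<le> real N * pi / (2*\<Omega>)"
  proof (intro allI impI)
    fix j assume "j \<le> N"
    then have "\<pi> j < n" using pin nN by simp
    then have "y (\<pi> j) \<in> {- ((real n - 1) * pi / (2 * \<Omega>)) .. (real n - 1) * pi / (2 * \<Omega>)}"
      using assms(6) by blast
    moreover have "real n - 1 = real N" using nN by simp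
    ultimately show "\<bar>y' j\<bar> \<le> real N * pi / (2*\<Omega>)" by (simp add: y'_def abs_le_iff)
  qed
  have amp: "\<forall>j\<le>N. cmod (a' j) \<ge> m"
    using m_le pin nN by (auto simp: a'_def)
  have samp: "\<forall>q\<in>{1..M}. cmod (meas_vec \<Omega> M (Suc N) a' y' q - meas_vec \<Omega> M N ah' yh q) < 2*\<sigma>"
  proof
    fix q assume q: "q \<in> {1..M}"
    have w: "cmod (W q) < \<sigma>" using supnorm_ge[OF q, of W] assms(8) by linarith
    have h: "cmod (meas_vec \<Omega> M k ah yh q - Y q) < \<sigma>"
      using supnorm_ge[OF q, of "\<lambda>q. meas_vec \<Omega> M k ah yh q - Y q"] adm
      unfolding admissible_def by linarith
    have "meas_vec \<Omega> M (Suc N) a' y' q - meas_vec \<Omega> M N ah' yh q = - (meas_vec \<Omega> M k ah yh q - Y q) - W q"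
      using assms(7) by (simp add: mv mvh)
    also have "cmod \<dots> \<le> cmod (meas_vec \<Omega> M k ah yh q - Y q) + cmod (W q)"
      by (metis norm_minus_cancel norm_triangle_ineq4)
    finally show "cmod (meas_vec \<Omega> M (Suc N) a' y' q - meas_vec \<Omega> M N ah' yh q) < 2*\<sigma>"
      using w h by linarith
  qed
  obtain H where H: "H \<ge> \<Omega>/(2*N)" and lt: "1 < 2^(2*N+1) * (\<sigma>/m) / ((H*D/pi)^(2*N) * (fact N)^2)"
    using core[OF N1 M Om Dpos m_pos gap rng amp samp] by blast
  have "2^(2*N+1) * (\<sigma>/m) / ((H*D/pi)^(2*N) * (fact N)^2) \<le> 1"
    by (rule final_arith[OF N1 Om sig m_pos H D_def])
  then show False using lt by linarith
qed

end
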